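(* Let $N_c\ge 1$. Let $\mathcal{D}_{xx}\in\mathbb{R}^{N_c\times N_c}$ be a block diagonal matrix whose diagonal blocks are $\mathcal{D}^{(n_k)}(a_k,b_k)$, $k=1,\dots,S$ (with $\sum_k n_k=N_c$), and let $\mathcal{D}_{yy}\in\mathbb{R}^{N_c\times N_c}$ be a block diagonal matrix whose diagonal blocks are $\mathcal{D}^{(m_l)}(c_l,d_l)$, $l=1,\dots,T$ (with $\sum_l m_l=N_c$). Let $P\in\mathbb{R}^{N_c\times N_c}$ be a permutation matrix. Assume that every block, in both $\mathcal{D}_{xx}$ and $\mathcal{D}_{yy}$, with parameters $(n,a,b)$ satisfies one of: (1) $n=1$ and $a>0$; (2) $n=2$, $a>0$ and $ab>1$; (3) $n\ge 3$, $a>\frac{n-2}{n-1}$, $b>\frac{n-2}{n-1}$ and $a>\frac{(n-2)b-(n-3)}{(n-1)b-(n-2)}$. Then the matrix $-\mathcal{L}:=\mathcal{D}_{xx}+P^T\mathcal{D}_{yy}P$ is symmetric positive definite.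
   Context: $\mathcal{D}^{(n)}(a,b)\in\mathbb{R}^{n\times n}$ is defined by: $\mathcal{D}^{(1)}(a,b)=(a)$; $\mathcal{D}^{(2)}(a,b)=\begin{pmatrix} a & -1\\ -1 & b\end{pmatrix}$; and for $n\ge 3$, the tridiagonal matrix with all sub- and super-diagonal entries equal to $-1$, diagonal entries $(a,2,\dots,2,b)$ (first entry $a$, last entry $b$, others $2$), and all other entries zero. In the application, $N_c$ is the number of computational grid points of a 2D embedded boundary discretization, $\mathcal{D}_{xx}$ is the (scaled) discretization of $-\partial_{xx}$ along all horizontal grid-line segments in lexicographic (fast-in-$x$) ordering, $\mathcal{D}_{yy}$ is the discretization of $-\partial_{yy}$ along all vertical segments in fast-in-$y$ ordering, and $P$ is the permutation converting the fast-in-$x$ ordering to the fast-in-$y$ ordering, so that $\mathcal{L}$ is the discrete Laplacian. *)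

theory Defs
  imports "Jordan_Normal_Form.Matrix" "HOL-Combinatorics.Permutations"
begin

definition Dmat :: "nat \<Rightarrow> real \<Rightarrow> real \<Rightarrow> real mat" where
  "Dmat n a b = mat n n (\<lambda>(i,j).
     if i = j then (if i = 0 then a else if i = n - 1 then b else 2)
     else if i = j + 1 \<or> j = i + 1 then -1 else 0)"

fun block_diag :: "real mat list \<Rightarrow> real mat" where
  "block_diag [] = 0\<^sub>m 0 0"
| "block_diag (B # Bs) =
     four_block_mat B (0\<^sub>m (dim_row B) (dim_col (block_diag Bs)))
                      (0\<^sub>m (dim_row (block_diag Bs)) (dim_col B)) (block_diag Bs)"

definition Dblocks :: "(nat \<times> real \<times> real) list \<Rightarrow> real mat" where
  "Dblocks ps = block_diag (map (\<lambda>(n,a,b). Dmat n a b) ps)"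

definition block_ok :: "nat \<times> real \<times> real \<Rightarrow> bool" where
  "block_ok p = (case p of (n,a,b) \<Rightarrow>
      (n = 1 \<and> a > 0)
    \<or> (n = 2 \<and> a > 0 \<and> a * b > 1)
    \<or> (n \<ge> 3 \<and> a > (real n - 2) / (real n - 1) \<and> b > (real n - 2) / (real n - 1)
        \<and> a > ((real n - 2) * b - (real n - 3)) / ((real n - 1) * b - (real n - 2))))"

definition perm_mat :: "nat \<Rightarrow> real mat \<Rightarrow> bool" where
  "perm_mat N P = (P \<in> carrier_mat N N \<and>
     (\<exists>p. p permutes {..<N} \<and> (\<forall>i<N. \<forall>j<N. P $$ (i,j) = (if p i = j then 1 else 0))))"

definition spd :: "nat \<Rightarrow> real mat \<Rightarrow> bool" where
  "spd N A = (A \<in> carrier_mat N N \<and> transpose_mat A = A \<and>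
     (\<forall>v \<in> carrier_vec N. v \<noteq> 0\<^sub>v N \<longrightarrow> v \<bullet> (A *\<^sub>v v) > 0))"

end

theory Submission
  imports Defs
begin

lemma quad_pos2:
  fixes a b x y S m :: real
  assumes m: "m \<ge> 1" and al: "a - 1 + 1/m > 0" and be: "b - 1 + 1/m > 0"
    and ab: "(a - 1 + 1/m) * (b - 1 + 1/m) > 1/m^2"
    and S: "(x - y)^2 \<le> m * S" and nz: "x \<noteq> 0 \<or> y \<noteq> 0"
  shows "S + (a-1)*x^2 + (b-1)*y^2 > 0"
proof -
  define \<alpha> where "\<alpha> = a - 1 + 1/m"
  define \<beta> where "\<beta> = b - 1 + 1/m"
  have S': "(x-y)^2/m \<le> S" using S m by (simp add: divide_le_eq mult.commute)
  have q: "\<alpha>*x^2 - 2*x*y/m + \<beta>*y^2 > 0"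
  proof -
    have "\<alpha> * (\<alpha>*x^2 - 2*x*y/m + \<beta>*y^2) = (\<alpha>*x - y/m)^2 + (\<alpha>*\<beta> - 1/m^2)*y^2"
      using m by (simp add: power2_eq_square field_simps)
    moreover have "(\<alpha>*x - y/m)^2 + (\<alpha>*\<beta> - 1/m^2)*y^2 > 0"
    proof (cases "y = 0")
      case True then have "x \<noteq> 0" using nz by auto
      then show ?thesis using True al \<alpha>_def by simp
    next
      case False
      then have "(\<alpha>*\<beta> - 1/m^2)*y^2 > 0" using ab \<alpha>_def \<beta>_def by simp
      then show ?thesis by (smt (verit) zero_le_power2)
    qed
    ultimately show ?thesis using al \<alpha>_def by (metis zero_less_mult_pos)
  qed
  have "(x-y)^2/m + (a-1)*x^2 + (b-1)*y^2 = \<alpha>*x^2 - 2*x*y/m + \<beta>*y^2"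
    unfolding \<alpha>_def \<beta>_def using m by (simp add: power2_eq_square field_simps)
  then show ?thesis using q S' by linarith
qed

lemma cs:
  fixes g :: "nat \<Rightarrow> real"
  assumes "m > 0"
  shows "(\<Sum>i<m. g i)^2 \<le> real m * (\<Sum>i<m. (g i)^2)"
proof -
  define t where "t = (\<Sum>i<m. g i)"
  have "0 \<le> (\<Sum>i<m. (g i - t/m)^2)" by (simp add: sum_nonneg)
  also have "\<dots> = (\<Sum>i<m. (g i)^2 - 2*(t/m)* g i + (t/m)^2)"
    by (simp add: power2_eq_square algebra_simps)
  also have "\<dots> = (\<Sum>i<m. (g i)^2) - 2*(t/m)*t + m*(t/m)^2"
    by (simp add: sum.distrib sum_subtractf sum_distrib_left t_def)
  also have "\<dots> = (\<Sum>i<m. (g i)^2) - t^2/m"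
    using assms by (simp add: power2_eq_square field_simps)
  finally show ?thesis using assms unfolding t_def by (simp add: field_simps)
qed

lemma cond_conv:
  fixes a b :: real and n :: nat
  assumes "block_ok (n,a,b)" "n \<ge> 2"
  shows "a - 1 + 1/(real n - 1) > 0 \<and> b - 1 + 1/(real n - 1) > 0 \<and>
     (a - 1 + 1/(real n - 1)) * (b - 1 + 1/(real n - 1)) > 1/(real n - 1)^2"
proof (cases "n = 2")
  case True
  then have "a > 0" "a*b > 1" using assms unfolding block_ok_def by auto
  then have "b > 0" by (smt (verit) mult_nonneg_nonpos)
  then show ?thesis using True \<open>a > 0\<close> \<open>a*b>1\<close> by simp
next
  case False
  then have n3: "n \<ge> 3" using assms by auto
  define m where "m = real n - 1"
  have m: "m \<ge> 2" using n3 m_def by simp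
  have h: "a > (m - 1) / m" "b > (m-1)/m" "a > ((m-1)*b - (m-2)) / (m*b - (m-1))"
    using assms n3 unfolding block_ok_def m_def by (auto simp: algebra_simps)
  have e1: "(m-1)/m = 1 - 1/m" using m by (simp add: field_simps)
  define \<beta> where "\<beta> = b - 1 + 1/m"
  have bp: "\<beta> > 0" using h(2) e1 \<beta>_def by simp
  have den: "m*b - (m-1) = m*\<beta>" using m \<beta>_def by (simp add: field_simps)
  have num: "(m-1)*b - (m-2) = (m-1)*\<beta> + 1/m" using m unfolding \<beta>_def by (simp add: field_simps)
  have "((m-1)*b - (m-2)) / (m*b - (m-1)) = (1 - 1/m) + 1/(m^2*\<beta>)"
    unfolding den num using m bp by (simp add: field_simps power2_eq_square)
  then have "a - 1 + 1/m > 1/(m^2*\<beta>)" using h(3) by simp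
  then have "(a - 1 + 1/m) * \<beta> > 1/m^2" using bp m
    by (simp add: field_simps power2_eq_square)
  moreover have "a - 1 + 1/m > 0" using h(1) e1 by simp
  ultimately show ?thesis using bp unfolding \<beta>_def m_def by simp
qed

lemma Dmat_carrier: "Dmat n a b \<in> carrier_mat n n" unfolding Dmat_def by simp

lemma Dmat_sym: "transpose_mat (Dmat n a b) = Dmat n a b"
  unfolding Dmat_def by (rule eq_matI) auto

lemma quad_form: assumes "A \<in> carrier_mat n n" "v \<in> carrier_vec n"
  shows "v \<bullet> (A *\<^sub>v v) = (\<Sum>i<n. v$i * (\<Sum>j<n. A$$(i,j) * v$j))"
  using assms by (simp add: scalar_prod_def atLeast0LessThan mult_mat_vec_def row_def)

lemma Dmat_row:
  fixes f :: "nat \<Rightarrow> real"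
  assumes i: "i < n"
  shows "(\<Sum>j<n. Dmat n a b $$ (i,j) * f j) =
     (if i = 0 then a else if i = n - 1 then b else 2) * f i
     - (if 0 < i then f (i-1) else 0) - (if i + 1 < n then f (i+1) else 0)"
proof -
  let ?d = "(if i = 0 then a else if i = n - 1 then b else 2)"
  have "(\<Sum>j<n. Dmat n a b $$ (i,j) * f j) = (\<Sum>j<n. (if j = i then ?d * f j else 0)
       - (if 0 < i \<and> j = i - 1 then f j else 0) - (if j = i + 1 then f j else 0))"
    by (rule sum.cong) (auto simp: Dmat_def i)
  also have "\<dots> = ?d * f i - (if 0 < i then f (i-1) else 0) - (if i + 1 < n then f (i+1) else 0)"
    using i by (simp add: sum_subtractf sum.delta' cong: if_cong)
  finally show ?thesis .
qed


lemma Dmat_quad_raw: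
  fixes f :: "nat \<Rightarrow> real"
  shows "(\<Sum>i<k+2. f i * (\<Sum>j<k+2. Dmat (k+2) a b $$ (i,j) * f j)) =
     (\<Sum>i<k+1. (f i - f (i+1))^2) + (a-1)*(f 0)^2 + (b-1)*(f (k+1))^2"
proof -
  let ?n = "k+2"
  have s1: "(\<Sum>i<?n. f i * (\<Sum>j<?n. Dmat ?n a b $$ (i,j) * f j)) =
     (\<Sum>i<?n. f i * ((if i = 0 then a else if i = ?n - 1 then b else 2) * f i
     - (if 0 < i then f (i-1) else 0) - (if i + 1 < ?n then f (i+1) else 0)))"
  proof (rule sum.cong[OF refl])
    fix i assume "i \<in> {..<?n}"
    then have "i < ?n" by simp
    from Dmat_row[OF this, of a b f] show "f i * (\<Sum>j<?n. Dmat ?n a b $$ (i,j) * f j) =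
       f i * ((if i = 0 then a else if i = ?n - 1 then b else 2) * f i
     - (if 0 < i then f (i-1) else 0) - (if i + 1 < ?n then f (i+1) else 0))" by (rule arg_cong)
  qed
  also have "\<dots> = (\<Sum>i<?n. (if i = 0 then a else if i = ?n - 1 then b else 2) * (f i)^2)
     - (\<Sum>i<?n. (if 0 < i then f i * f (i-1) else 0))
     - (\<Sum>i<?n. (if i + 1 < ?n then f i * f (i+1) else 0))"
    unfolding sum_subtractf[symmetric] by (rule sum.cong) (auto simp: algebra_simps power2_eq_square)
  also have "(\<Sum>i<?n. (if i = 0 then a else if i = ?n - 1 then b else 2) * (f i)^2)
      = a * (f 0)^2 + (\<Sum>i<k. 2 * (f (Suc i))^2) + b * (f (k+1))^2"
  proof -
    let ?g = "\<lambda>i. (if i = 0 then a else if i = ?n - 1 then b else 2) * (f i)^2"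
    have "(\<Sum>i<Suc (Suc k). ?g i) = ?g 0 + (\<Sum>i<Suc k. ?g (Suc i))"
      by (rule sum.lessThan_Suc_shift)
    also have "(\<Sum>i<Suc k. ?g (Suc i)) = (\<Sum>i<k. ?g (Suc i)) + ?g (Suc k)"
      by (rule sum.lessThan_Suc)
    also have "(\<Sum>i<k. ?g (Suc i)) = (\<Sum>i<k. 2 * (f (Suc i))^2)"
      by (rule sum.cong) auto
    finally show ?thesis by simp
  qed
  also have "(\<Sum>i<?n. (if 0 < i then f i * f (i-1) else 0)) = (\<Sum>i<k+1. f i * f (i+1))"
  proof -
    let ?g = "\<lambda>i. (if 0 < i then f i * f (i-1) else 0)"
    have "(\<Sum>i<Suc (Suc k). ?g i) = ?g 0 + (\<Sum>i<Suc k. ?g (Suc i))"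
      by (rule sum.lessThan_Suc_shift)
    also have "(\<Sum>i<Suc k. ?g (Suc i)) = (\<Sum>i<k+1. f i * f (i+1))"
      by (rule sum.cong) (auto simp: mult.commute)
    finally show ?thesis by simp
  qed
  also have "(\<Sum>i<?n. (if i + 1 < ?n then f i * f (i+1) else 0)) = (\<Sum>i<k+1. f i * f (i+1))"
    by (simp only: add_2_eq_Suc' sum.lessThan_Suc) simp
  also have "(\<Sum>i<k+1. (f i - f (i+1))^2) = (\<Sum>i<k+1. (f i)^2) + (\<Sum>i<k+1. (f (i+1))^2)
       - 2 * (\<Sum>i<k+1. f i * f (i+1))"
    by (simp add: power2_eq_square algebra_simps sum.distrib sum_subtractf sum_distrib_left)
  moreover have "(\<Sum>i<k+1. (f i)^2) = (f 0)^2 + (\<Sum>i<k. (f (Suc i))^2)"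
    using sum.lessThan_Suc_shift[of "\<lambda>i. (f i)^2" k] by simp
  moreover have "(\<Sum>i<k+1. (f (i+1))^2) = (\<Sum>i<k. (f (Suc i))^2) + (f (k+1))^2"
    by simp
  ultimately show ?thesis by (simp add: sum_distrib_left[symmetric] algebra_simps)
qed


lemma Dmat_spd:
  assumes ok: "block_ok (n,a,b)"
  shows "spd n (Dmat n a b)"
  unfolding spd_def
proof (intro conjI ballI impI)
  show "Dmat n a b \<in> carrier_mat n n" by (rule Dmat_carrier)
  show "transpose_mat (Dmat n a b) = Dmat n a b" by (rule Dmat_sym)
  fix v :: "real vec" assume v: "v \<in> carrier_vec n" and nz: "v \<noteq> 0\<^sub>v n"
  define f where "f i = v $ i" for i
  have q: "v \<bullet> (Dmat n a b *\<^sub>v v) = (\<Sum>i<n. f i * (\<Sum>j<n. Dmat n a b $$ (i,j) * f j))"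
    unfolding f_def by (rule quad_form[OF Dmat_carrier v])
  have ex: "\<exists>i<n. f i \<noteq> 0"
  proof (rule ccontr)
    assume "\<not> ?thesis"
    then have "v = 0\<^sub>v n" using v unfolding f_def by (intro eq_vecI) auto
    with nz show False by simp
  qed
  show "v \<bullet> (Dmat n a b *\<^sub>v v) > 0"
  proof (cases "n = 1")
    case True
    then have "a > 0" using ok unfolding block_ok_def by auto
    moreover have "f 0 \<noteq> 0" using ex True by auto
    ultimately have "0 < a * (f 0)^2" by simp
    then show ?thesis unfolding q using True by (simp add: Dmat_def power2_eq_square mult.assoc mult.left_commute)
  next
    case False
    then have "n \<ge> 2" using ok unfolding block_ok_def by auto
    then obtain k where n: "n = k + 2" by (metis add.commute le_Suc_ex)
    define S where "S = (\<Sum>i<k+1. (f i - f (i+1))^2)"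
    have Q: "v \<bullet> (Dmat n a b *\<^sub>v v) = S + (a-1)*(f 0)^2 + (b-1)*(f (k+1))^2"
      unfolding S_def using q Dmat_quad_raw[of f k a b] n by simp
    note cc = cond_conv[OF ok \<open>n \<ge> 2\<close>]
    have rn: "real n - 1 = real (k+1)" using n by simp
    have tel: "(\<Sum>i<k+1. f i - f (i+1)) = f 0 - f (k+1)"
      using sum_lessThan_telescope'[of f "k+1"] by simp
    have csi: "(f 0 - f (k+1))^2 \<le> real (k+1) * S"
      using cs[of "k+1" "\<lambda>i. f i - f (i+1)"] unfolding tel S_def by simp
    show ?thesis
    proof (cases "f 0 \<noteq> 0 \<or> f (k+1) \<noteq> 0")
      case True
      show ?thesis unfolding Q
        by (rule quad_pos2[of "real (k+1)"]) (use cc rn csi True in auto)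
    next
      case False
      have "S > 0"
      proof (rule ccontr)
        assume "\<not> S > 0"
        moreover have "S \<ge> 0" unfolding S_def by (simp add: sum_nonneg)
        ultimately have "S = 0" by simp
        then have g0: "\<forall>i\<in>{..<k+1}. (f i - f (i+1))^2 = 0"
          unfolding S_def by (subst (asm) sum_nonneg_eq_0_iff) auto
        have "\<forall>i. i \<le> k+1 \<longrightarrow> f i = 0"
        proof (intro allI)
          fix i show "i \<le> k+1 \<longrightarrow> f i = 0"
          proof (induction i)
            case 0 then show ?case using False by simp
          next
            case (Suc i)
            show ?case
            proof
              assume "Suc i \<le> k+1"
              then have "i < k+1" by simp
              then have "(f i - f (i+1))^2 = 0" using g0 by simp
              then show "f (Suc i) = 0" using Suc \<open>i < k+1\<close> by simp
            qed
          qed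
        qed
        then show False using ex n by auto
      qed
      then show ?thesis unfolding Q using False by simp
    qed
  qed
qed


lemma zero_mat_mult_vec': assumes "v \<in> carrier_vec m" shows "(0\<^sub>m n m :: real mat) *\<^sub>v v = 0\<^sub>v n"
  using assms by (intro eq_vecI) (auto simp: scalar_prod_def)

lemma spd_nonneg: assumes "spd n A" "v \<in> carrier_vec n"
  shows "v \<bullet> (A *\<^sub>v v) \<ge> 0"
proof (cases "v = 0\<^sub>v n")
  case True
  have "A \<in> carrier_mat n n" using assms unfolding spd_def by auto
  then show ?thesis using True by simp
next
  case False then show ?thesis using assms unfolding spd_def by force
qed

lemma spd_four_block:
  assumes A: "spd n1 A" and B: "spd n2 B"
  shows "spd (n1+n2) (four_block_mat A (0\<^sub>m n1 n2) (0\<^sub>m n2 n1) B)"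
proof -
  have Ac: "A \<in> carrier_mat n1 n1" and Bc: "B \<in> carrier_mat n2 n2"
    and At: "transpose_mat A = A" and Bt: "transpose_mat B = B"
    using A B unfolding spd_def by auto
  let ?M = "four_block_mat A (0\<^sub>m n1 n2) (0\<^sub>m n2 n1) B"
  show ?thesis unfolding spd_def
  proof (intro conjI ballI impI)
    show "?M \<in> carrier_mat (n1+n2) (n1+n2)" using Ac Bc by simp
    show "transpose_mat ?M = ?M"
      using Ac Bc At Bt by (subst transpose_four_block_mat[of _ n1 n1 _ n2 _ n2]) auto
    fix v :: "real vec" assume v: "v \<in> carrier_vec (n1+n2)" and nz: "v \<noteq> 0\<^sub>v (n1+n2)"
    define v1 where "v1 = vec_first v n1"
    define v2 where "v2 = vec_last v n2"
    have vv: "v = v1 @\<^sub>v v2" unfolding v1_def v2_def using v by simp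
    have v1c: "v1 \<in> carrier_vec n1" and v2c: "v2 \<in> carrier_vec n2" unfolding v1_def v2_def by auto
    have "?M *\<^sub>v v = (A *\<^sub>v v1 + 0\<^sub>m n1 n2 *\<^sub>v v2) @\<^sub>v (0\<^sub>m n2 n1 *\<^sub>v v1 + B *\<^sub>v v2)"
      unfolding vv by (rule four_block_mat_mult_vec[OF Ac _ _ Bc v1c v2c]) auto
    also have "A *\<^sub>v v1 + 0\<^sub>m n1 n2 *\<^sub>v v2 = A *\<^sub>v v1"
      using Ac v1c v2c by (simp add: zero_mat_mult_vec')
    also have "0\<^sub>m n2 n1 *\<^sub>v v1 + B *\<^sub>v v2 = B *\<^sub>v v2"
      using Bc v1c v2c by (simp add: zero_mat_mult_vec')
    finally have "v \<bullet> (?M *\<^sub>v v) = v1 \<bullet> (A *\<^sub>v v1) + v2 \<bullet> (B *\<^sub>v v2)"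
      unfolding vv using Ac Bc v1c v2c by (simp add: scalar_prod_append[of _ n1 _ n2])
    moreover have "v1 \<noteq> 0\<^sub>v n1 \<or> v2 \<noteq> 0\<^sub>v n2"
    proof (rule ccontr)
      assume "\<not> ?thesis"
      then have "v = 0\<^sub>v n1 @\<^sub>v 0\<^sub>v n2" using vv by simp
      also have "\<dots> = 0\<^sub>v (n1+n2)" by (intro eq_vecI) auto
      finally show False using nz by simp
    qed
    moreover have "v1 \<bullet> (A *\<^sub>v v1) \<ge> 0" "v2 \<bullet> (B *\<^sub>v v2) \<ge> 0"
      using spd_nonneg[OF A v1c] spd_nonneg[OF B v2c] .
    moreover have "v1 \<noteq> 0\<^sub>v n1 \<Longrightarrow> v1 \<bullet> (A *\<^sub>v v1) > 0" using A v1c unfolding spd_def by blast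
    moreover have "v2 \<noteq> 0\<^sub>v n2 \<Longrightarrow> v2 \<bullet> (B *\<^sub>v v2) > 0" using B v2c unfolding spd_def by blast
    ultimately show "v \<bullet> (?M *\<^sub>v v) > 0" by linarith
  qed
qed

lemma spd_block_diag:
  assumes "\<forall>B\<in>set Bs. spd (dim_row B) B"
  shows "spd (sum_list (map dim_row Bs)) (block_diag Bs)"
  using assms
proof (induction Bs)
  case Nil
  show ?case unfolding spd_def
  proof (intro conjI ballI impI)
    fix v :: "real vec" assume v: "v \<in> carrier_vec (sum_list (map dim_row []))"
      and nz: "v \<noteq> 0\<^sub>v (sum_list (map dim_row []))"
    have "v = 0\<^sub>v (sum_list (map dim_row []))" using v by (intro eq_vecI) auto
    with nz show "v \<bullet> (block_diag [] *\<^sub>v v) > 0" by blast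
  qed simp_all
next
  case (Cons B Bs)
  have IH: "spd (sum_list (map dim_row Bs)) (block_diag Bs)" using Cons.IH Cons.prems by simp
  have sB: "spd (dim_row B) B" using Cons.prems by simp
  have c1: "block_diag Bs \<in> carrier_mat (sum_list (map dim_row Bs)) (sum_list (map dim_row Bs))"
    using IH unfolding spd_def by blast
  have c2: "B \<in> carrier_mat (dim_row B) (dim_row B)" using sB unfolding spd_def by blast
  have e: "block_diag (B # Bs) = four_block_mat B (0\<^sub>m (dim_row B) (sum_list (map dim_row Bs)))
      (0\<^sub>m (sum_list (map dim_row Bs)) (dim_row B)) (block_diag Bs)"
  proof -
    have d1: "dim_row (block_diag Bs) = sum_list (map dim_row Bs)"
      and d2: "dim_col (block_diag Bs) = sum_list (map dim_row Bs)" using carrier_matD[OF c1] by blast+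
    have d3: "dim_col B = dim_row B" using carrier_matD(2)[OF c2] .
    show ?thesis unfolding block_diag.simps d1 d2 d3 ..
  qed
  have "sum_list (map dim_row (B # Bs)) = dim_row B + sum_list (map dim_row Bs)" by simp
  then show ?case unfolding e using spd_four_block[OF sB IH] by metis
qed

lemma spd_add: assumes "spd n A" "spd n B" shows "spd n (A + B)"
proof -
  have Ac: "A \<in> carrier_mat n n" and Bc: "B \<in> carrier_mat n n"
    using assms unfolding spd_def by auto
  show ?thesis unfolding spd_def
  proof (intro conjI ballI impI)
    show "A + B \<in> carrier_mat n n" using Ac Bc by simp
    show "transpose_mat (A + B) = A + B" using assms Ac Bc unfolding spd_def
      by (simp add: transpose_add)
    fix v :: "real vec" assume v: "v \<in> carrier_vec n" and nz: "v \<noteq> 0\<^sub>v n"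
    have "v \<bullet> ((A + B) *\<^sub>v v) = v \<bullet> (A *\<^sub>v v) + v \<bullet> (B *\<^sub>v v)"
      using Ac Bc v by (simp add: add_mult_distrib_mat_vec scalar_prod_add_distrib[of _ n])
    moreover have "v \<bullet> (A *\<^sub>v v) > 0" "v \<bullet> (B *\<^sub>v v) > 0"
      using assms v nz unfolding spd_def by blast+
    ultimately show "v \<bullet> ((A + B) *\<^sub>v v) > 0" by linarith
  qed
qed

lemma spd_perm:
  assumes P: "perm_mat n P" and B: "spd n B"
  shows "spd n (transpose_mat P * B * P)"
proof -
  have Pc: "P \<in> carrier_mat n n" using P unfolding perm_mat_def by blast
  obtain p where p: "p permutes {..<n}" and Pe: "\<forall>i<n. \<forall>j<n. P $$ (i,j) = (if p i = j then 1 else 0)"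
    using P unfolding perm_mat_def by blast
  have Bc: "B \<in> carrier_mat n n" and Bt: "transpose_mat B = B" using B unfolding spd_def by auto
  have PTc: "transpose_mat P \<in> carrier_mat n n" using Pc by simp
  show ?thesis unfolding spd_def
  proof (intro conjI ballI impI)
    show "transpose_mat P * B * P \<in> carrier_mat n n" using Pc Bc by simp
    show "transpose_mat (transpose_mat P * B * P) = transpose_mat P * B * P"
      using Pc Bc Bt by (simp add: transpose_mult[of _ n n _ n] assoc_mult_mat[of _ n n _ n _ n])
    fix v :: "real vec" assume v: "v \<in> carrier_vec n" and nz: "v \<noteq> 0\<^sub>v n"
    define w where "w = P *\<^sub>v v"
    have wc: "w \<in> carrier_vec n" unfolding w_def using Pc v by simp
    have "(transpose_mat P * B * P) *\<^sub>v v = transpose_mat P *\<^sub>v (B *\<^sub>v w)"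
      unfolding w_def using Pc Bc v
      by (simp add: assoc_mult_mat_vec[of _ n n _ n])
    then have "v \<bullet> ((transpose_mat P * B * P) *\<^sub>v v) = v \<bullet> (transpose_mat P *\<^sub>v (B *\<^sub>v w))"
      by simp
    also have "\<dots> = (transpose_mat P *\<^sub>v (B *\<^sub>v w)) \<bullet> v"
      by (rule comm_scalar_prod[OF v]) (use PTc Bc wc in simp)
    also have "\<dots> = (B *\<^sub>v w) \<bullet> w"
      unfolding w_def by (rule transpose_vec_mult_scalar[OF Pc v]) (use Bc Pc v in simp)
    also have "\<dots> = w \<bullet> (B *\<^sub>v w)"
      by (rule comm_scalar_prod[of _ n]) (use Bc wc in simp_all)
    finally have eq: "v \<bullet> ((transpose_mat P * B * P) *\<^sub>v v) = w \<bullet> (B *\<^sub>v w)" .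
    have wi: "w $ i = v $ (p i)" if i: "i < n" for i
    proof -
      have pi: "p i < n" using p i by (meson lessThan_iff permutes_in_image)
      have "w $ i = (\<Sum>j<n. P $$ (i,j) * v $ j)"
        unfolding w_def using Pc v i by (simp add: scalar_prod_def row_def atLeast0LessThan)
      also have "\<dots> = (\<Sum>j<n. if p i = j then v $ j else 0)"
        by (rule sum.cong) (use Pe i in auto)
      also have "\<dots> = v $ (p i)" using pi by simp
      finally show ?thesis .
    qed
    have "w \<noteq> 0\<^sub>v n"
    proof
      assume w0: "w = 0\<^sub>v n"
      have "v = 0\<^sub>v n"
      proof (rule eq_vecI)
        show "dim_vec v = dim_vec (0\<^sub>v n)" using v by simp
        fix j assume "j < dim_vec (0\<^sub>v n)"
        then have j: "j < n" by simp
        obtain i where i: "i < n" "p i = j"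
          using p j by (metis lessThan_iff permutes_inverses(1) permutes_in_image permutes_inv)
        have "v $ j = w $ i" using wi[OF i(1)] i(2) by simp
        also have "\<dots> = 0" using w0 i by simp
        finally show "v $ j = 0\<^sub>v n $ j" using j by simp
      qed
      with nz show False by simp
    qed
    then show "v \<bullet> ((transpose_mat P * B * P) *\<^sub>v v) > 0"
      unfolding eq using B wc unfolding spd_def by blast
  qed
qed

lemma Dblocks_spd:
  assumes "\<forall>p \<in> set xs. block_ok p" "(\<Sum>(n,a,b)\<leftarrow>xs. n) = N"
  shows "spd N (Dblocks xs)"
proof -
  let ?F = "\<lambda>(n,a,b). Dmat n a b"
  have dr: "dim_row (Dmat n a b) = n" for n a b using Dmat_carrier[of n a b] by blast
  have "\<forall>B\<in>set (map ?F xs). spd (dim_row B) B"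
  proof
    fix B assume "B \<in> set (map ?F xs)"
    then obtain n a b where nab: "(n,a,b) \<in> set xs" "B = Dmat n a b" by auto
    then show "spd (dim_row B) B" using assms(1) Dmat_spd dr by metis
  qed
  moreover have "sum_list (map dim_row (map ?F xs)) = N"
  proof -
    have mm: "map dim_row (map ?F xs) = map (\<lambda>(n,a,b). n) xs"
      unfolding map_map by (rule map_cong[OF refl]) (auto simp: dr split: prod.splits)
    show ?thesis by (simp only: mm assms(2))
  qed
  ultimately show ?thesis unfolding Dblocks_def using spd_block_diag by metis
qed

theorem theorem2:
  fixes Nc :: nat and xs ys :: "(nat \<times> real \<times> real) list" and P :: "real mat"
  assumes "Nc \<ge> 1"
    and "(\<Sum>(n,a,b)\<leftarrow>xs. n) = Nc"
    and "(\<Sum>(m,c,d)\<leftarrow>ys. m) = Nc"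
    and "perm_mat Nc P"
    and "\<forall>p \<in> set xs. block_ok p"
    and "\<forall>p \<in> set ys. block_ok p"
  shows "spd Nc (Dblocks xs + transpose_mat P * Dblocks ys * P)"
  by (rule spd_add[OF Dblocks_spd[OF assms(5,2)] spd_perm[OF assms(4) Dblocks_spd[OF assms(6,3)]]])

end
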